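(* Let $p$ be an odd prime and $s\in\mathbb{Z}_p$ with $-2s=1$. For $x_1,x_2,y_1,y_2,w,v\in\mathbb{Z}_p$ consider the system in unknowns $(b_1,b_2)\in\mathbb{Z}_p^2$: $$b_1x_1+sb_1(1-b_1)y_1+b_2x_2+sb_2(1-b_2)y_2=w,\qquad b_1y_1+b_2y_2=v,$$ and let $\Delta:=(2wy_1+vy_1-v^2-2vx_1)(y_1+y_2)y_2+(vy_2+x_1y_2-x_2y_1)^2$. If $y_1,y_2,y_1+y_2\neq0$, then the system has exactly two solutions when $\Delta$ is a nonzero square in $\mathbb{Z}_p$, namely $b_1=\frac{vy_1+x_2y_1-x_1y_2\pm\sqrt\Delta}{y_1(y_1+y_2)}$, $b_2=\frac{vy_2+x_1y_2-x_2y_1\mp\sqrt\Delta}{y_2(y_1+y_2)}$; exactly one solution when $\Delta=0$; and none when $\Delta$ is a nonsquare. Moreover, if $(x_1,x_2,y_1,y_2,w,v)$ is uniformly random in $\mathbb{Z}_p^6$ and $\eta$ denotes the number of solutions, then conditioned on $y_1,y_2,y_1+y_2\neq0$ we have $\Pr(\eta=0)=\Pr(\eta=2)=\frac12-\frac1{2p}$ and $\Pr(\eta=1)=\frac1p$. *)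

theory Defs
  imports Main "Berlekamp_Zassenhaus.Finite_Field"
begin

text \<open>Z_p is modelled as the prime field type 'p mod_ring with p = CARD('p) prime.\<close>

definition solset :: "'a::field \<Rightarrow> 'a \<Rightarrow> 'a \<Rightarrow> 'a \<Rightarrow> 'a \<Rightarrow> 'a \<Rightarrow> 'a \<Rightarrow> ('a \<times> 'a) set" where
  "solset s x1 x2 y1 y2 w v = {(b1, b2).
     b1 * x1 + s * b1 * (1 - b1) * y1 + b2 * x2 + s * b2 * (1 - b2) * y2 = w \<and>
     b1 * y1 + b2 * y2 = v}"

definition Delta :: "'a::field \<Rightarrow> 'a \<Rightarrow> 'a \<Rightarrow> 'a \<Rightarrow> 'a \<Rightarrow> 'a \<Rightarrow> 'a" where
  "Delta x1 x2 y1 y2 w v =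
     (2 * w * y1 + v * y1 - v ^ 2 - 2 * v * x1) * (y1 + y2) * y2 + (v * y2 + x1 * y2 - x2 * y1) ^ 2"

definition is_square :: "'a::field \<Rightarrow> bool" where
  "is_square a \<longleftrightarrow> (\<exists>r. r ^ 2 = a)"

definition cond_event :: "('a::field \<times> 'a \<times> 'a \<times> 'a \<times> 'a \<times> 'a) set" where
  "cond_event = {(x1, x2, y1, y2, w, v). y1 \<noteq> 0 \<and> y2 \<noteq> 0 \<and> y1 + y2 \<noteq> 0}"

definition eta :: "'a::field \<Rightarrow> 'a \<times> 'a \<times> 'a \<times> 'a \<times> 'a \<times> 'a \<Rightarrow> nat" where
  "eta s t = (case t of (x1, x2, y1, y2, w, v) \<Rightarrow> card (solset s x1 x2 y1 y2 w v))"

definition cond_prob_eta :: "'a::{field,finite} \<Rightarrow> nat \<Rightarrow> real" where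
  "cond_prob_eta s k =
     real (card {t \<in> (cond_event :: ('a \<times> 'a \<times> 'a \<times> 'a \<times> 'a \<times> 'a) set). eta s t = k})
     / real (card (cond_event :: ('a \<times> 'a \<times> 'a \<times> 'a \<times> 'a \<times> 'a) set))"

end

theory Submission
  imports Defs
begin

lemma ident:
  fixes s x1 x2 y1 y2 w v b1 b2 :: "'a::field"
  assumes "-2*s = 1" "v = b1*y1+b2*y2"
  shows "(y1*(y1+y2)*b1 - (v*y1+x2*y1-x1*y2))^2 - Delta x1 x2 y1 y2 w v
       = 2*y1*(y1+y2)*y2*((b1 * x1 + s * b1 * (1 - b1) * y1 + b2 * x2 + s * b2 * (1 - b2) * y2) - w)"
proof -
  have s2: "2*s = -1" using assms(1) by (simp add: algebra_simps) (metis add.inverse_inverse minus_mult_left)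
  have "2*y1*(y1+y2)*y2*((b1 * x1 + s * b1 * (1 - b1) * y1 + b2 * x2 + s * b2 * (1 - b2) * y2) - w)
     = y1*(y1+y2)*y2*(2*b1*x1 + (2*s)*b1*(1-b1)*y1 + 2*b2*x2 + (2*s)*b2*(1-b2)*y2 - 2*w)"
    by (simp add: algebra_simps)
  also have "\<dots> = y1*(y1+y2)*y2*(2*b1*x1 - b1*(1-b1)*y1 + 2*b2*x2 - b2*(1-b2)*y2 - 2*w)"
    unfolding s2 by (simp add: algebra_simps)
  also have "\<dots> = (y1*(y1+y2)*b1 - (v*y1+x2*y1-x1*y2))^2 - Delta x1 x2 y1 y2 w v"
    unfolding Delta_def assms(2) by (simp add: algebra_simps power2_eq_square)
  finally show ?thesis by simp
qed

lemma key:
  fixes s x1 x2 y1 y2 w v b1 b2 :: "'a::field"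
  assumes two: "2 \<noteq> (0::'a)" and s: "-2*s = 1" and y: "y1 \<noteq> 0" "y2 \<noteq> 0" "y1+y2 \<noteq> 0"
  shows "(b1,b2) \<in> solset s x1 x2 y1 y2 w v \<longleftrightarrow>
     b2 = (v - b1*y1)/y2 \<and> (y1*(y1+y2)*b1 - (v*y1+x2*y1-x1*y2))^2 = Delta x1 x2 y1 y2 w v"
proof -
  have v_iff: "b1*y1+b2*y2 = v \<longleftrightarrow> b2 = (v - b1*y1)/y2" using y by (auto simp: field_simps)
  have nz: "2*y1*(y1+y2)*y2 \<noteq> 0" using two y by simp
  show ?thesis
  proof (cases "b1*y1+b2*y2 = v")
    case True
    note I = ident[OF s True[symmetric], of x2 x1 w]
    have "(b1 * x1 + s * b1 * (1 - b1) * y1 + b2 * x2 + s * b2 * (1 - b2) * y2 = w) \<longleftrightarrow>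
       (y1*(y1+y2)*b1 - (v*y1+x2*y1-x1*y2))^2 = Delta x1 x2 y1 y2 w v"
      using I nz by (metis eq_iff_diff_eq_0 mult_eq_0_iff)
    then show ?thesis using True v_iff unfolding solset_def by auto
  next
    case False
    then show ?thesis using v_iff unfolding solset_def by auto
  qed
qed

lemma solset_explicit:
  fixes s x1 x2 y1 y2 w v r :: "'a::field"
  assumes two: "2 \<noteq> (0::'a)" and s: "-2*s = 1" and y: "y1 \<noteq> 0" "y2 \<noteq> 0" "y1+y2 \<noteq> 0"
    and r: "r^2 = Delta x1 x2 y1 y2 w v"
  shows "solset s x1 x2 y1 y2 w v =
                {((v * y1 + x2 * y1 - x1 * y2 + r) / (y1 * (y1 + y2)),
                  (v * y2 + x1 * y2 - x2 * y1 - r) / (y2 * (y1 + y2))),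
                 ((v * y1 + x2 * y1 - x1 * y2 - r) / (y1 * (y1 + y2)),
                  (v * y2 + x1 * y2 - x2 * y1 + r) / (y2 * (y1 + y2)))}" (is "?L = ?R")
proof (rule Set.set_eqI)
  fix p :: "'a \<times> 'a"
  obtain b1 b2 where p: "p = (b1, b2)" by fastforce
  define K where "K = v * y1 + x2 * y1 - x1 * y2"
  have A: "y1*(y1+y2) \<noteq> 0" using y by simp
  have e1: "y1*(y1+y2)*b1 - K = r \<longleftrightarrow> b1 = (K + r)/(y1*(y1+y2))"
    using A by (auto simp: field_simps)
  have e2: "y1*(y1+y2)*b1 - K = -r \<longleftrightarrow> b1 = (K - r)/(y1*(y1+y2))"
    using A by (auto simp: field_simps)
  have f1: "(v - (K + r)/(y1*(y1+y2))*y1)/y2 = (v * y2 + x1 * y2 - x2 * y1 - r) / (y2 * (y1 + y2))"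
  proof -
    have "(K + r)/(y1*(y1+y2))*y1 = y1*(K + r)/(y1*(y1+y2))" by (simp add: mult.commute)
    also have "\<dots> = (K + r)/(y1+y2)" using y by simp
    finally have a: "(K + r)/(y1*(y1+y2))*y1 = (K + r)/(y1+y2)" .
    have b: "v - (K + r)/(y1+y2) = (v * y2 + x1 * y2 - x2 * y1 - r)/(y1+y2)"
      using y unfolding K_def by (simp add: field_simps)
    show ?thesis unfolding a b by (simp add: mult.commute)
  qed
  have f2: "(v - (K - r)/(y1*(y1+y2))*y1)/y2 = (v * y2 + x1 * y2 - x2 * y1 + r) / (y2 * (y1 + y2))"
  proof -
    have "(K - r)/(y1*(y1+y2))*y1 = y1*(K - r)/(y1*(y1+y2))" by (simp add: mult.commute)
    also have "\<dots> = (K - r)/(y1+y2)" using y by simp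
    finally have a: "(K - r)/(y1*(y1+y2))*y1 = (K - r)/(y1+y2)" .
    have b: "v - (K - r)/(y1+y2) = (v * y2 + x1 * y2 - x2 * y1 + r)/(y1+y2)"
      using y unfolding K_def by (simp add: field_simps)
    show ?thesis unfolding a b by (simp add: mult.commute)
  qed
  have "p \<in> ?L \<longleftrightarrow> b2 = (v - b1*y1)/y2 \<and> (y1*(y1+y2)*b1 - K = r \<or> y1*(y1+y2)*b1 - K = -r)"
    unfolding p key[OF two s y] r[symmetric] K_def power2_eq_iff by simp
  also have "\<dots> \<longleftrightarrow> p \<in> ?R"
    unfolding e1 e2 p K_def[symmetric] using f1 f2 by auto
  finally show "p \<in> ?L \<longleftrightarrow> p \<in> ?R" .
qed

lemma part1:
  fixes s x1 x2 y1 y2 w v :: "'a::field"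
  assumes two: "2 \<noteq> (0::'a)" and s: "-2*s = 1" and y: "y1 \<noteq> 0" "y2 \<noteq> 0" "y1+y2 \<noteq> 0"
  shows "(Delta x1 x2 y1 y2 w v \<noteq> 0 \<and> is_square (Delta x1 x2 y1 y2 w v) \<longrightarrow>
           card (solset s x1 x2 y1 y2 w v) = 2 \<and>
           (\<forall>r. r ^ 2 = Delta x1 x2 y1 y2 w v \<longrightarrow>
              solset s x1 x2 y1 y2 w v =
                {((v * y1 + x2 * y1 - x1 * y2 + r) / (y1 * (y1 + y2)),
                  (v * y2 + x1 * y2 - x2 * y1 - r) / (y2 * (y1 + y2))),
                 ((v * y1 + x2 * y1 - x1 * y2 - r) / (y1 * (y1 + y2)),
                  (v * y2 + x1 * y2 - x2 * y1 + r) / (y2 * (y1 + y2)))})) \<and>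
        (Delta x1 x2 y1 y2 w v = 0 \<longrightarrow> card (solset s x1 x2 y1 y2 w v) = 1) \<and>
        (\<not> is_square (Delta x1 x2 y1 y2 w v) \<longrightarrow> solset s x1 x2 y1 y2 w v = {})"
proof (intro conjI impI allI)
  assume h: "Delta x1 x2 y1 y2 w v \<noteq> 0 \<and> is_square (Delta x1 x2 y1 y2 w v)"
  then obtain r where r: "r^2 = Delta x1 x2 y1 y2 w v" unfolding is_square_def by blast
  with h have r0: "r \<noteq> 0" by auto
  have A: "y1*(y1+y2) \<noteq> 0" using y by simp
  have "(v * y1 + x2 * y1 - x1 * y2 + r) / (y1 * (y1 + y2)) \<noteq> (v * y1 + x2 * y1 - x1 * y2 - r) / (y1 * (y1 + y2))"
  proof
    assume "(v * y1 + x2 * y1 - x1 * y2 + r) / (y1 * (y1 + y2)) = (v * y1 + x2 * y1 - x1 * y2 - r) / (y1 * (y1 + y2))"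
    then have "v * y1 + x2 * y1 - x1 * y2 + r = v * y1 + x2 * y1 - x1 * y2 - r" using A by (simp add: divide_cancel_right)
    then have "2*r = 0" by (simp add: algebra_simps)
    with two r0 show False by simp
  qed
  then show "card (solset s x1 x2 y1 y2 w v) = 2" unfolding solset_explicit[OF two s y r] by simp
next
  fix r assume "r^2 = Delta x1 x2 y1 y2 w v"
  then show "solset s x1 x2 y1 y2 w v =
                {((v * y1 + x2 * y1 - x1 * y2 + r) / (y1 * (y1 + y2)),
                  (v * y2 + x1 * y2 - x2 * y1 - r) / (y2 * (y1 + y2))),
                 ((v * y1 + x2 * y1 - x1 * y2 - r) / (y1 * (y1 + y2)),
                  (v * y2 + x1 * y2 - x2 * y1 + r) / (y2 * (y1 + y2)))}" by (rule solset_explicit[OF two s y])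
next
  assume "Delta x1 x2 y1 y2 w v = 0"
  then have "0^2 = Delta x1 x2 y1 y2 w v" by simp
  note E = solset_explicit[OF two s y this]
  show "card (solset s x1 x2 y1 y2 w v) = 1" unfolding E by simp
next
  assume ns: "\<not> is_square (Delta x1 x2 y1 y2 w v)"
  show "solset s x1 x2 y1 y2 w v = {}"
  proof (rule ccontr)
    assume "solset s x1 x2 y1 y2 w v \<noteq> {}"
    then obtain b1 b2 where "(b1,b2) \<in> solset s x1 x2 y1 y2 w v" by auto
    then have "(y1*(y1+y2)*b1 - (v*y1+x2*y1-x1*y2))^2 = Delta x1 x2 y1 y2 w v"
      using key[OF two s y] by blast
    with ns show False unfolding is_square_def by blast
  qed
qed


definition Rr :: "'a::field \<Rightarrow> 'a \<Rightarrow> 'a \<Rightarrow> 'a \<Rightarrow> 'a \<Rightarrow> 'a" where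
  "Rr x1 x2 y1 y2 v = (v * y1 - v ^ 2 - 2 * v * x1) * (y1 + y2) * y2 + (v * y2 + x1 * y2 - x2 * y1) ^ 2"

definition wof :: "'a::field \<Rightarrow> 'a \<Rightarrow> 'a \<Rightarrow> 'a \<Rightarrow> 'a \<Rightarrow> 'a \<Rightarrow> 'a" where
  "wof x1 x2 y1 y2 v d = (d - Rr x1 x2 y1 y2 v) / (2*y1*(y1+y2)*y2)"

definition psi :: "('a::field \<times> 'a \<times> 'a \<times> 'a \<times> 'a) \<times> 'a \<Rightarrow> 'a \<times> 'a \<times> 'a \<times> 'a \<times> 'a \<times> 'a" where
  "psi qd = (case qd of ((x1, x2, y1, y2, v), d) \<Rightarrow> (x1, x2, y1, y2, wof x1 x2 y1 y2 v d, v))"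

definition DeltaT :: "'a::field \<times> 'a \<times> 'a \<times> 'a \<times> 'a \<times> 'a \<Rightarrow> 'a" where
  "DeltaT t = (case t of (x1, x2, y1, y2, w, v) \<Rightarrow> Delta x1 x2 y1 y2 w v)"

definition Sset :: "('a::field \<times> 'a \<times> 'a \<times> 'a \<times> 'a) set" where
  "Sset = {(x1, x2, y1, y2, v). y1 \<noteq> 0 \<and> y2 \<noteq> 0 \<and> y1 + y2 \<noteq> 0}"

lemma Delta_lin: "Delta x1 x2 y1 y2 w v = 2*y1*(y1+y2)*y2*w + Rr x1 x2 y1 y2 v"
  unfolding Delta_def Rr_def by (simp add: algebra_simps)

lemma Delta_wof:
  assumes "2 \<noteq> (0::'a::field)" "y1 \<noteq> 0" "y2 \<noteq> 0" "y1 + y2 \<noteq> (0::'a)"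
  shows "Delta x1 x2 y1 y2 (wof x1 x2 y1 y2 v d) v = d"
  unfolding Delta_lin wof_def using assms by simp

lemma wof_Delta:
  assumes "2 \<noteq> (0::'a::field)" "y1 \<noteq> 0" "y2 \<noteq> 0" "y1 + y2 \<noteq> (0::'a)"
  shows "wof x1 x2 y1 y2 v (Delta x1 x2 y1 y2 w v) = w"
  unfolding Delta_lin wof_def using assms by simp

lemma count_P:
  assumes two: "2 \<noteq> (0::'a::{field,finite})"
  shows "card {t \<in> (cond_event :: ('a \<times> 'a \<times> 'a \<times> 'a \<times> 'a \<times> 'a) set). P (DeltaT t)}
         = card (Sset :: ('a \<times> 'a \<times> 'a \<times> 'a \<times> 'a) set) * card {d::'a. P d}"
proof -
  have inj: "inj_on psi ((Sset :: ('a \<times> 'a \<times> 'a \<times> 'a \<times> 'a) set) \<times> UNIV)"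
  proof (rule inj_onI)
    fix a b :: "('a \<times> 'a \<times> 'a \<times> 'a \<times> 'a) \<times> 'a"
    assume a: "a \<in> Sset \<times> UNIV" and b: "b \<in> Sset \<times> UNIV" and e: "psi a = psi b"
    obtain qa d where aq: "a = (qa, d)" by (rule prod.exhaust)
    obtain x1 x2 y1 y2 v where "qa = (x1, x2, y1, y2, v)" by (rule prod_cases5)
    with aq have av: "a = ((x1, x2, y1, y2, v), d)" by simp
    obtain qb d' where bq: "b = (qb, d')" by (rule prod.exhaust)
    obtain x1' x2' y1' y2' v' where "qb = (x1', x2', y1', y2', v')" by (rule prod_cases5)
    with bq have bv: "b = ((x1', x2', y1', y2', v'), d')" by simp
    from a av have y: "y1 \<noteq> 0" "y2 \<noteq> 0" "y1 + y2 \<noteq> 0" by (auto simp: Sset_def)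
    from e av bv have q: "x1 = x1'" "x2 = x2'" "y1 = y1'" "y2 = y2'" "v = v'"
      and w: "wof x1 x2 y1 y2 v d = wof x1' x2' y1' y2' v' d'" by (auto simp: psi_def)
    have w': "wof x1 x2 y1 y2 v d = wof x1 x2 y1 y2 v d'" using w q by simp
    have "d = Delta x1 x2 y1 y2 (wof x1 x2 y1 y2 v d) v" using Delta_wof[OF two y] by simp
    also have "\<dots> = Delta x1 x2 y1 y2 (wof x1 x2 y1 y2 v d') v" by (simp only: w')
    also have "\<dots> = d'" using Delta_wof[OF two y] by simp
    finally have "d = d'" .
    then show "a = b" unfolding av bv using q by simp
  qed
  have eq: "{t \<in> (cond_event :: ('a \<times> 'a \<times> 'a \<times> 'a \<times> 'a \<times> 'a) set). P (DeltaT t)}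
        = psi ` ((Sset :: ('a \<times> 'a \<times> 'a \<times> 'a \<times> 'a) set) \<times> {d. P d})"
  proof (rule Set.set_eqI)
    fix t :: "'a \<times> 'a \<times> 'a \<times> 'a \<times> 'a \<times> 'a"
    obtain x1 x2 y1 y2 w v where tv: "t = (x1, x2, y1, y2, w, v)" by (rule prod_cases6)
    show "t \<in> {t \<in> cond_event. P (DeltaT t)} \<longleftrightarrow> t \<in> psi ` (Sset \<times> {d. P d})"
    proof
      assume h: "t \<in> {t \<in> cond_event. P (DeltaT t)}"
      then have y: "y1 \<noteq> 0" "y2 \<noteq> 0" "y1 + y2 \<noteq> 0" by (auto simp: tv cond_event_def)
      have "psi ((x1, x2, y1, y2, v), Delta x1 x2 y1 y2 w v) = t"
        unfolding psi_def tv using wof_Delta[OF two y] by simp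
      moreover have "((x1, x2, y1, y2, v), Delta x1 x2 y1 y2 w v) \<in> Sset \<times> {d. P d}"
        using h y by (auto simp: tv Sset_def DeltaT_def)
      ultimately show "t \<in> psi ` (Sset \<times> {d. P d})" by (metis image_eqI)
    next
      assume "t \<in> psi ` (Sset \<times> {d. P d})"
      then obtain x1' x2' y1' y2' v' d where h: "((x1', x2', y1', y2', v'), d) \<in> Sset \<times> {d. P d}"
        and tq: "t = psi ((x1', x2', y1', y2', v'), d)" by auto
      then have y: "y1' \<noteq> 0" "y2' \<noteq> 0" "y1' + y2' \<noteq> 0" "P d" by (auto simp: Sset_def)
      show "t \<in> {t \<in> cond_event. P (DeltaT t)}"
        using y Delta_wof[OF two y(1-3)] unfolding tq psi_def DeltaT_def cond_event_def by simp
    qed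
  qed
  have "card {t \<in> (cond_event :: ('a \<times> 'a \<times> 'a \<times> 'a \<times> 'a \<times> 'a) set). P (DeltaT t)}
      = card ((Sset :: ('a \<times> 'a \<times> 'a \<times> 'a \<times> 'a) set) \<times> {d. P d})"
    unfolding eq by (rule card_image) (rule inj_on_subset[OF inj], auto)
  then show ?thesis by (simp add: card_cartesian_product)
qed

lemma card_nz_squares:
  assumes two: "2 \<noteq> (0::'a::{field,finite})"
  shows "2 * card {d::'a. d \<noteq> 0 \<and> is_square d} = CARD('a) - 1"
proof -
  let ?Q = "{d::'a. d \<noteq> 0 \<and> is_square d}"
  have U: "(\<Union>q\<in>?Q. {x. x^2 = q}) = UNIV - {0}"
    by (auto simp: is_square_def)
  have fib: "card {x. x^2 = q} = 2" if "q \<in> ?Q" for q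
  proof -
    from that obtain r where r: "r^2 = q" "q \<noteq> 0" unfolding is_square_def by auto
    then have r0: "r \<noteq> 0" by auto
    have "{x. x^2 = q} = {r, -r}" using r by (auto simp: power2_eq_iff)
    moreover have "r \<noteq> -r"
    proof
      assume "r = -r" then have "2*r = 0" by (simp add: algebra_simps)
      with two r0 show False by simp
    qed
    ultimately show ?thesis by simp
  qed
  have "card (UNIV - {0::'a}) = (\<Sum>q\<in>?Q. card {x. x^2 = q})"
    unfolding U[symmetric] by (rule card_UN_disjoint) auto
  also have "\<dots> = (\<Sum>q\<in>?Q. 2)" using fib by simp
  finally show ?thesis by simp
qed

lemma two_nz: "(2::'p::prime_card mod_ring) \<noteq> 0 \<or> \<not> odd (CARD('p))"
proof (rule disjCI)
  assume "\<not> \<not> odd CARD('p)"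
  then have od: "odd CARD('p)" by simp
  show "(2::'p mod_ring) \<noteq> 0"
  proof
    assume "(2::'p mod_ring) = 0"
    then have "of_nat 2 = (0::'p mod_ring)" by simp
    then have "CARD('p) dvd 2" by (rule of_nat_0_mod_ring_dvd)
    then have "CARD('p) \<le> 2" by (rule dvd_imp_le) simp
    moreover have "CARD('p) \<ge> 2" using prime_card[where 'a='p] by (simp add: prime_ge_2_nat)
    ultimately have "CARD('p) = 2" by simp
    with od show False by simp
  qed
qed

lemma eta_char:
  fixes s :: "'a::{field,finite}"
  assumes two: "2 \<noteq> (0::'a)" and s: "-2*s = 1" and t: "t \<in> cond_event"
  shows "(eta s t = 1 \<longleftrightarrow> DeltaT t = 0) \<and>
         (eta s t = 2 \<longleftrightarrow> DeltaT t \<noteq> 0 \<and> is_square (DeltaT t)) \<and>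
         (eta s t = 0 \<longleftrightarrow> \<not> is_square (DeltaT t))"
proof -
  obtain x1 x2 y1 y2 w v where tv: "t = (x1, x2, y1, y2, w, v)" by (rule prod_cases6)
  from t have y: "y1 \<noteq> 0" "y2 \<noteq> 0" "y1 + y2 \<noteq> 0" by (auto simp: tv cond_event_def)
  note P = part1[OF two s y, of x1 x2 w v]
  have e: "eta s t = card (solset s x1 x2 y1 y2 w v)" "DeltaT t = Delta x1 x2 y1 y2 w v"
    by (simp_all add: tv eta_def DeltaT_def)
  have sq0: "is_square (0::'a)" unfolding is_square_def by auto
  show ?thesis
  proof (cases "Delta x1 x2 y1 y2 w v = 0")
    case True
    then show ?thesis using P sq0 e by auto
  next
    case False
    then show ?thesis using P e by (cases "is_square (Delta x1 x2 y1 y2 w v)") auto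
  qed
qed

theorem mainTheorem9:
  fixes s :: "'p::prime_card mod_ring"
  assumes odd_p: "odd (CARD('p))"
    and s_def: "- 2 * s = 1"
  shows
    "(\<forall>x1 x2 y1 y2 w v :: 'p mod_ring.
        y1 \<noteq> 0 \<and> y2 \<noteq> 0 \<and> y1 + y2 \<noteq> 0 \<longrightarrow>
        (Delta x1 x2 y1 y2 w v \<noteq> 0 \<and> is_square (Delta x1 x2 y1 y2 w v) \<longrightarrow>
           card (solset s x1 x2 y1 y2 w v) = 2 \<and>
           (\<forall>r. r ^ 2 = Delta x1 x2 y1 y2 w v \<longrightarrow>
              solset s x1 x2 y1 y2 w v =
                {((v * y1 + x2 * y1 - x1 * y2 + r) / (y1 * (y1 + y2)),
                  (v * y2 + x1 * y2 - x2 * y1 - r) / (y2 * (y1 + y2))),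
                 ((v * y1 + x2 * y1 - x1 * y2 - r) / (y1 * (y1 + y2)),
                  (v * y2 + x1 * y2 - x2 * y1 + r) / (y2 * (y1 + y2)))})) \<and>
        (Delta x1 x2 y1 y2 w v = 0 \<longrightarrow> card (solset s x1 x2 y1 y2 w v) = 1) \<and>
        (\<not> is_square (Delta x1 x2 y1 y2 w v) \<longrightarrow> solset s x1 x2 y1 y2 w v = {}))
     \<and> cond_prob_eta s 0 = 1 / 2 - 1 / (2 * real CARD('p))
     \<and> cond_prob_eta s 2 = 1 / 2 - 1 / (2 * real CARD('p))
     \<and> cond_prob_eta s 1 = 1 / real CARD('p)"
proof -
  have two: "(2::'p mod_ring) \<noteq> 0" using two_nz odd_p by blast
  let ?p = "CARD('p)"
  have part: "\<forall>x1 x2 y1 y2 w v :: 'p mod_ring.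
        y1 \<noteq> 0 \<and> y2 \<noteq> 0 \<and> y1 + y2 \<noteq> 0 \<longrightarrow>
        (Delta x1 x2 y1 y2 w v \<noteq> 0 \<and> is_square (Delta x1 x2 y1 y2 w v) \<longrightarrow>
           card (solset s x1 x2 y1 y2 w v) = 2 \<and>
           (\<forall>r. r ^ 2 = Delta x1 x2 y1 y2 w v \<longrightarrow>
              solset s x1 x2 y1 y2 w v =
                {((v * y1 + x2 * y1 - x1 * y2 + r) / (y1 * (y1 + y2)),
                  (v * y2 + x1 * y2 - x2 * y1 - r) / (y2 * (y1 + y2))),
                 ((v * y1 + x2 * y1 - x1 * y2 - r) / (y1 * (y1 + y2)),
                  (v * y2 + x1 * y2 - x2 * y1 + r) / (y2 * (y1 + y2)))})) \<and>
        (Delta x1 x2 y1 y2 w v = 0 \<longrightarrow> card (solset s x1 x2 y1 y2 w v) = 1) \<and>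
        (\<not> is_square (Delta x1 x2 y1 y2 w v) \<longrightarrow> solset s x1 x2 y1 y2 w v = {})"
    apply (intro allI impI)
    apply (rule part1[OF two s_def])
    apply auto
    done
  define N where "N = card (Sset :: ('p mod_ring \<times> 'p mod_ring \<times> 'p mod_ring \<times> 'p mod_ring \<times> 'p mod_ring) set)"
  have "((0, 0, 1, 1, 0) :: 'p mod_ring \<times> 'p mod_ring \<times> 'p mod_ring \<times> 'p mod_ring \<times> 'p mod_ring) \<in> Sset"
    using two by (simp add: Sset_def)
  then have Npos: "N > 0" unfolding N_def card_gt_0_iff by auto
  define c0 where "c0 = card {d::'p mod_ring. \<not> is_square d}"
  define c2 where "c2 = card {d::'p mod_ring. d \<noteq> 0 \<and> is_square d}"
  have c2: "2 * c2 = ?p - 1" unfolding c2_def using card_nz_squares[OF two] by simp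
  have "{d::'p mod_ring. \<not> is_square d} = (UNIV - {0}) - {d. d \<noteq> 0 \<and> is_square d}"
    by (auto simp: is_square_def)
  then have "c0 = card (UNIV - {0::'p mod_ring}) - c2" unfolding c0_def c2_def
    by (simp add: card_Diff_subset subset_iff)
  then have c0: "2 * c0 = ?p - 1" using c2 by (simp add: card_Diff_singleton)
  have pge: "?p \<ge> 2" using prime_card[where 'a='p] by (simp add: prime_ge_2_nat)
  have cardC: "card (cond_event :: ('p mod_ring \<times> 'p mod_ring \<times> 'p mod_ring \<times> 'p mod_ring \<times> 'p mod_ring \<times> 'p mod_ring) set) = N * ?p"
    using count_P[OF two, of "\<lambda>_. True"] unfolding N_def by simp
  have cnt: "cond_prob_eta s k = real c / real ?p"
    if h: "\<And>t. t \<in> cond_event \<Longrightarrow> (eta s t = k \<longleftrightarrow> P (DeltaT t))" and c: "c = card {d. P d}"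
    for k c and P :: "'p mod_ring \<Rightarrow> bool"
  proof -
    have "{t \<in> (cond_event :: ('p mod_ring \<times> 'p mod_ring \<times> 'p mod_ring \<times> 'p mod_ring \<times> 'p mod_ring \<times> 'p mod_ring) set). eta s t = k}
        = {t \<in> cond_event. P (DeltaT t)}" using h by blast
    then have "card {t \<in> (cond_event :: ('p mod_ring \<times> 'p mod_ring \<times> 'p mod_ring \<times> 'p mod_ring \<times> 'p mod_ring \<times> 'p mod_ring) set). eta s t = k} = N * c"
      using count_P[OF two, of P] unfolding N_def c by simp
    then show ?thesis unfolding cond_prob_eta_def cardC using Npos by simp
  qed
  have r0: "cond_prob_eta s 0 = real c0 / real ?p"
    by (rule cnt[where P="\<lambda>d. \<not> is_square d"]) (use eta_char[OF two s_def] c0_def in auto)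
  have r2: "cond_prob_eta s 2 = real c2 / real ?p"
    by (rule cnt[where P="\<lambda>d. d \<noteq> 0 \<and> is_square d"]) (use eta_char[OF two s_def] c2_def in auto)
  have r1: "cond_prob_eta s 1 = real 1 / real ?p"
    by (rule cnt[where P="\<lambda>d. d = 0"]) (use eta_char[OF two s_def] in auto)
  have rc0: "real c0 = (real ?p - 1) / 2" using c0 pge by (simp add: of_nat_diff[symmetric])
  have rc2: "real c2 = (real ?p - 1) / 2" using c2 pge by (simp add: of_nat_diff[symmetric])
  have "real c0 / real ?p = 1 / 2 - 1 / (2 * real ?p)" using pge unfolding rc0 by (simp add: field_simps)
  moreover have "real c2 / real ?p = 1 / 2 - 1 / (2 * real ?p)" using pge unfolding rc2 by (simp add: field_simps)
  ultimately show ?thesis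
    apply (intro conjI)
       apply (rule part)
      apply (simp only: r0)
     apply (simp only: r2)
    apply (simp only: r1)
    done
qed

end
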